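(* Let $m\ge2$ be an integer, $t\ge0$, $\lambda>0$, $s=\frac{t}{2\lambda}$, and consider searching on $m$ rays with turn cost $t$ and lower bound $\lambda$. (i) If $s\le\frac{1}{(\frac{m}{m-1})^{m-1}-1}$, the cyclic strategy with distances $$x_i=\left(\left(\frac{1}{m-1}\Big(1-\Big(\big(\tfrac{m}{m-1}\big)^{m-1}-1\Big)s\Big)\,i+(1+s)\right)\Big(\frac{m}{m-1}\Big)^i-s\right)\lambda$$ is optimal and has competitive ratio $1+2\frac{m^m}{(m-1)^{m-1}}$. (ii) If $s\ge\frac{1}{(\frac{m}{m-1})^{m-1}-1}$, the cyclic strategy with distances $$x_i=\Big((1+s)\big(1+s^{-1}\big)^{\frac{i}{m-1}}-s\Big)\lambda$$ has competitive ratio $$\frac{\big(1+s^{-1}\big)^{-\frac{1}{m-1}}-\big(3+2s^{-1}\big)}{\big(1+s^{-1}\big)^{-\frac{1}{m-1}}-1}.$$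
   Context: Searching on $m$ rays with turn cost. Fix $\lambda>0$, $t\ge0$. A search strategy is a sequence $(x_i,r_i)_{i\ge1}$ with $x_i>0$, $r_i\in\{1,\dots,m\}$ (the $m$ rays emanating from the origin), such that $\sup\{x_i:r_i=r\}=\infty$ for every ray $r$. At step $i$ the searcher walks distance $x_i$ from the origin along ray $r_i$ and, if the target is not found, walks back to the origin, paying an extra turn cost $t$; so each unsuccessful step costs $2x_i+t$. The target lies on one ray at unknown distance $D\ge\lambda$ and is found at the first step $j$ with $r_j$ equal to its ray and $x_j\ge D$; the total cost is then $\sum_{i=1}^{j-1}(2x_i+t)+D$. The competitive ratio is the supremum over all target positions of total cost divided by $D$; a strategy is optimal if its competitive ratio is minimal among all strategies. A cyclic strategy with distances $x_i$ visits the rays in round-robin order, $r_i\equiv i \pmod m$; for increasing distances its competitive ratio equals $\max\Big\{\frac{\sum_{i=1}^{m-1}(2x_i+t)+\lambda}{\lambda},\ \sup_{n\ge1}\frac{\sum_{i=1}^{n+m-1}(2x_i+t)+x_n}{x_n}\Big\}$. *)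

theory Defs
  imports "HOL-Analysis.Analysis"
begin

text \<open>A strategy is a pair of sequences (x, r) indexed from 1 (values at index 0 are ignored):
  step i walks distance x i along ray r i.\<close>

definition valid_strategy :: "nat \<Rightarrow> (nat \<Rightarrow> real) \<Rightarrow> (nat \<Rightarrow> nat) \<Rightarrow> bool" where
  "valid_strategy m x r \<longleftrightarrow>
     (\<forall>i\<ge>1. x i > 0 \<and> r i \<in> {1..m}) \<and>
     (\<forall>\<rho>\<in>{1..m}. \<not> bdd_above {x i | i. i \<ge> 1 \<and> r i = \<rho>})"

definition find_step :: "(nat \<Rightarrow> real) \<Rightarrow> (nat \<Rightarrow> nat) \<Rightarrow> nat \<Rightarrow> real \<Rightarrow> nat" where
  "find_step x r \<rho> D = (LEAST j. j \<ge> 1 \<and> r j = \<rho> \<and> x j \<ge> D)"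

definition search_cost :: "real \<Rightarrow> (nat \<Rightarrow> real) \<Rightarrow> (nat \<Rightarrow> nat) \<Rightarrow> nat \<Rightarrow> real \<Rightarrow> real" where
  "search_cost t x r \<rho> D = (\<Sum>i\<in>{1..<find_step x r \<rho> D}. 2 * x i + t) + D"

definition comp_ratio :: "nat \<Rightarrow> real \<Rightarrow> real \<Rightarrow> (nat \<Rightarrow> real) \<Rightarrow> (nat \<Rightarrow> nat) \<Rightarrow> ereal" where
  "comp_ratio m t lam x r =
     (SUP p \<in> {(\<rho>, D). \<rho> \<in> {1..m} \<and> D \<ge> lam}. ereal (search_cost t x r (fst p) (snd p) / snd p))"

definition optimal_strategy :: "nat \<Rightarrow> real \<Rightarrow> real \<Rightarrow> (nat \<Rightarrow> real) \<Rightarrow> (nat \<Rightarrow> nat) \<Rightarrow> bool" where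
  "optimal_strategy m t lam x r \<longleftrightarrow> valid_strategy m x r \<and>
     (\<forall>x' r'. valid_strategy m x' r' \<longrightarrow> comp_ratio m t lam x r \<le> comp_ratio m t lam x' r')"

definition cyclic_rays :: "nat \<Rightarrow> nat \<Rightarrow> nat" where
  "cyclic_rays m i = (i - 1) mod m + 1"

end

theory Submission
  imports Defs "HOL-Library.Infinite_Set"
begin

lemma bern_bound:
  fixes m :: nat and mu :: real
  assumes "m \<ge> 2" "mu > 0"
  shows "real m * (real m / (real m - 1)) ^ (m - 1) * (mu - 1) \<le> mu ^ m"
proof -
  define q where "q = real m / (real m - 1)"
  have m1: "real m - 1 > 0" using assms by simp
  have q0: "q > 0" unfolding q_def using m1 assms by simp
  have "1 + real m * (mu / q - 1) \<le> (1 + (mu / q - 1)) ^ m"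
    by (rule Bernoulli_inequality) (use q0 assms in simp)
  hence "q ^ m * (1 + real m * (mu / q - 1)) \<le> q ^ m * (mu / q) ^ m"
    using q0 by (simp add: mult_left_mono)
  also have "\<dots> = mu ^ m" using q0 by (simp add: power_divide)
  also have "q ^ m * (1 + real m * (mu / q - 1)) = real m * q ^ (m - 1) * (mu - 1)"
  proof -
    have qm: "q ^ m = q ^ (m - 1) * q" using assms by (metis Suc_diff_1 le_trans one_le_numeral power_Suc2 not_less_eq_eq zero_less_iff_neq_zero le_numeral_extra(4) less_one less_le_trans zero_less_one)
    have qq: "q * (real m - 1) = real m" unfolding q_def using m1 by simp
    show ?thesis unfolding qm using q0 qq by (simp add: field_simps)
  qed
  finally show ?thesis unfolding q_def .
qed


lemma gal:
  fixes u :: "nat \<Rightarrow> real" and a :: real and m :: nat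
  assumes m2: "m \<ge> 2" and pos: "\<And>n. u n > 0" and inc: "\<And>n. u n < u (Suc n)"
    and ineq: "\<And>n. u (n + m) \<le> a * (u (Suc n) - u n)"
  shows "real m * (real m / (real m - 1)) ^ (m - 1) \<le> a"
proof -
  define R where "R = range (\<lambda>n. u (Suc n) / u n)"
  define mu where "mu = Inf R"
  have Rgt: "\<And>r. r \<in> R \<Longrightarrow> r > 1" unfolding R_def using pos inc by auto
  have bdd: "bdd_below R" unfolding bdd_below_def using Rgt by (meson less_le_not_le)
  have mu_le: "mu \<le> u (Suc n) / u n" for n
    unfolding mu_def by (rule cInf_lower[OF _ bdd]) (auto simp: R_def)
  have mu1: "mu \<ge> 1" unfolding mu_def
    by (rule cInf_greatest) (use Rgt in \<open>auto simp: R_def less_imp_le\<close>)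
  have step: "u (Suc n) \<ge> mu * u n" for n
    using mu_le[of n] pos[of n] by (simp add: field_simps)
  have grow: "u (n + k) \<ge> mu ^ k * u n" for n k
  proof (induction k)
    case 0 then show ?case by simp
  next
    case (Suc k)
    have "mu ^ Suc k * u n = mu * (mu ^ k * u n)" by simp
    also have "\<dots> \<le> mu * u (n + k)" using Suc mu1 by (simp add: mult_left_mono)
    also have "\<dots> \<le> u (Suc (n + k))" using step by blast
    finally show ?case by simp
  qed
  have key: "mu ^ (m - 1) * u (Suc n) \<le> a * (u (Suc n) - u n)" for n
  proof -
    have "u (Suc n + (m - 1)) \<ge> mu ^ (m - 1) * u (Suc n)" by (rule grow)
    moreover have "Suc n + (m - 1) = n + m" using m2 by simp
    ultimately show ?thesis using ineq[of n] by simp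
  qed
  have a0: "a > 0"
  proof -
    have "0 < u m" using pos by blast
    also have "\<dots> \<le> a * (u 1 - u 0)" using ineq[of 0] by simp
    finally show ?thesis using inc[of 0] by (simp add: zero_less_mult_iff)
  qed
  have amu: "a - mu ^ (m - 1) > 0"
  proof -
    have "mu ^ (m - 1) * u 1 \<le> a * (u 1 - u 0)" using key[of 0] by simp
    hence "(a - mu ^ (m - 1)) * u 1 \<ge> a * u 0" by (simp add: algebra_simps)
    moreover have "a * u 0 > 0" using a0 pos by simp
    ultimately show ?thesis using pos[of 1] by (smt (verit) mult_nonpos_nonneg)
  qed
  have ratio: "u (Suc n) / u n \<ge> a / (a - mu ^ (m - 1))" for n
  proof -
    have "(a - mu ^ (m - 1)) * u (Suc n) \<ge> a * u n" using key[of n] by (simp add: algebra_simps)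
    thus ?thesis using amu pos[of n] by (simp add: field_simps)
  qed
  have "a / (a - mu ^ (m - 1)) \<le> Inf R"
    by (rule cInf_greatest) (use ratio in \<open>auto simp: R_def\<close>)
  hence "mu \<ge> a / (a - mu ^ (m - 1))" unfolding mu_def .
  hence "mu * (a - mu ^ (m - 1)) \<ge> a" using amu by (simp add: field_simps)
  hence A: "a * (mu - 1) \<ge> mu ^ m"
  proof -
    assume h: "mu * (a - mu ^ (m - 1)) \<ge> a"
    have "mu * mu ^ (m - 1) = mu ^ m" using m2 by (metis Suc_diff_1 le_trans one_le_numeral power_Suc zero_less_iff_neq_zero not_one_le_zero)
    thus ?thesis using h by (simp add: algebra_simps)
  qed
  have mugt: "mu > 1"
  proof (rule ccontr)
    assume "\<not> mu > 1" hence "mu = 1" using mu1 by simp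
    thus False using A by simp
  qed
  have "real m * (real m / (real m - 1)) ^ (m - 1) * (mu - 1) \<le> mu ^ m"
    by (rule bern_bound) (use m2 mugt in auto)
  also have "\<dots> \<le> a * (mu - 1)" by (rule A)
  finally show ?thesis using mugt by simp
qed


lemma distinct_sum_ge:
  fixes f :: "nat \<Rightarrow> real"
  assumes mono: "\<And>i j. i \<le> j \<Longrightarrow> f i \<le> f j"
  shows "finite B \<Longrightarrow> B \<subseteq> {n<..} \<Longrightarrow> card B = k \<Longrightarrow> (\<Sum>i\<in>{1..k}. f (n + i)) \<le> sum f B"
proof (induction k arbitrary: B)
  case 0 then show ?case by simp
next
  case (Suc k)
  have ne: "B \<noteq> {}" using Suc.prems by auto
  define M where "M = Max B"
  have MB: "M \<in> B" unfolding M_def using Suc.prems ne by simp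
  define B' where "B' = B - {M}"
  have cB': "card B' = k" unfolding B'_def using Suc.prems MB by simp
  have sub: "B \<subseteq> {n<..M}" unfolding M_def using Suc.prems by auto
  have "Suc k \<le> card {n<..M}" using card_mono[OF _ sub] Suc.prems by simp
  hence Mge: "n + Suc k \<le> M" by simp
  have IH: "(\<Sum>i\<in>{1..k}. f (n + i)) \<le> sum f B'"
    by (rule Suc.IH) (use Suc.prems cB' in \<open>auto simp: B'_def\<close>)
  have "(\<Sum>i\<in>{1..Suc k}. f (n + i)) = (\<Sum>i\<in>{1..k}. f (n + i)) + f (n + Suc k)" by simp
  also have "\<dots> \<le> sum f B' + f M" using IH mono[OF Mge] by simp
  also have "\<dots> = sum f B" unfolding B'_def using Suc.prems MB by (simp add: sum.remove)
  finally show ?case .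
qed

lemma sum_split_tail:
  fixes f :: "nat \<Rightarrow> real"
  assumes "a \<le> Suc n"
  shows "(\<Sum>j\<in>{a..n + k}. f j) = (\<Sum>j\<in>{a..n}. f j) + (\<Sum>i\<in>{1..k}. f (n + i))"
proof (induction k)
  case 0 then show ?case by simp
next
  case (Suc k)
  have "{a..n + Suc k} = insert (Suc (n + k)) {a..n + k}" using assms by auto
  hence "(\<Sum>j\<in>{a..n + Suc k}. f j) = f (Suc (n + k)) + (\<Sum>j\<in>{a..n + k}. f j)" by simp
  then show ?case using Suc by simp
qed


lemma cyc_rho: "1 \<le> \<rho> \<Longrightarrow> \<rho> \<le> m \<Longrightarrow> cyclic_rays m (\<rho> + m * k) = \<rho>"
  unfolding cyclic_rays_def
proof -
  assume a: "1 \<le> \<rho>" "\<rho> \<le> m"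
  have "\<rho> + m * k - 1 = (\<rho> - 1) + m * k" using a by simp
  hence "(\<rho> + m * k - 1) mod m = (\<rho> - 1) mod m" by simp
  also have "\<dots> = \<rho> - 1" using a by simp
  finally show "(\<rho> + m * k - 1) mod m + 1 = \<rho>" using a by simp
qed

lemma cyc_small: "1 \<le> j \<Longrightarrow> j \<le> m \<Longrightarrow> cyclic_rays m j = j"
  using cyc_rho[of j m 0] by simp

lemma cyc_shift: "m < j \<Longrightarrow> cyclic_rays m (j - m) = cyclic_rays m j"
  unfolding cyclic_rays_def
proof -
  assume "m < j"
  hence "j - 1 = (j - m - 1) + m" by simp
  thus "(j - m - 1) mod m + 1 = (j - 1) mod m + 1" by simp
qed

lemma cyc_range: "m \<ge> 1 \<Longrightarrow> cyclic_rays m j \<in> {1..m}"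
  unfolding cyclic_rays_def by (simp add: Suc_leI)

lemma cyclic_ratio:
  fixes x :: "nat \<Rightarrow> real" and R lam t :: real
  assumes m2: "m \<ge> 2" and lam: "lam > 0" and t: "t \<ge> 0" and x0: "x 0 = lam"
    and xge: "\<And>i. x i \<ge> lam"
    and unb: "\<And>V. \<exists>N. \<forall>i\<ge>N. V < x i"
    and iden: "\<And>n. (\<Sum>i\<in>{1..<n+m}. 2 * x i + t) = (R - 1) * x n"
  shows "valid_strategy m x (cyclic_rays m) \<and> comp_ratio m t lam x (cyclic_rays m) = ereal R"
proof -
  let ?r = "cyclic_rays m"
  have xpos: "x i > 0" for i using xge[of i] lam by simp
  have nn: "0 \<le> 2 * x i + t" for i using xpos[of i] t by simp
  have ray_big: "\<exists>i\<ge>1. ?r i = \<rho> \<and> V < x i" if "\<rho> \<in> {1..m}" for \<rho> V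
  proof -
    obtain N where N: "\<forall>i\<ge>N. V < x i" using unb by blast
    have "\<rho> + m * N \<ge> N" using m2 by (simp add: trans_le_add2)
    moreover have "?r (\<rho> + m * N) = \<rho>" using that cyc_rho by auto
    ultimately show ?thesis using N that by (intro exI[of _ "\<rho> + m * N"]) auto
  qed
  have nb: "\<not> bdd_above {x i |i. 1 \<le> i \<and> ?r i = \<rho>}" if rho: "\<rho> \<in> {1..m}" for \<rho>
  proof
    assume "bdd_above {x i |i. 1 \<le> i \<and> ?r i = \<rho>}"
    then obtain B where B: "\<And>y. y \<in> {x i |i. 1 \<le> i \<and> ?r i = \<rho>} \<Longrightarrow> y \<le> B"
      unfolding bdd_above_def by blast
    obtain i where "i \<ge> 1" "?r i = \<rho>" "B < x i" using ray_big[OF rho] by blast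
    thus False using B[of "x i"] by auto
  qed
  have valid: "valid_strategy m x ?r"
    unfolding valid_strategy_def using xpos cyc_range[of m] m2 nb by auto
  have R1: "R - 1 \<ge> 0"
  proof -
    have "0 \<le> (\<Sum>i\<in>{1..<0+m}. 2 * x i + t)" by (intro sum_nonneg) (use nn in auto)
    thus ?thesis using iden[of 0] x0 lam by (simp add: zero_le_mult_iff)
  qed
  have upper: "search_cost t x ?r \<rho> D / D \<le> R" if rho: "\<rho> \<in> {1..m}" and D: "D \<ge> lam" for \<rho> D
  proof -
    define j where "j = find_step x ?r \<rho> D"
    have ex: "\<exists>i. i \<ge> 1 \<and> ?r i = \<rho> \<and> x i \<ge> D" using ray_big[OF rho, of D] by force
    have jp: "j \<ge> 1 \<and> ?r j = \<rho> \<and> x j \<ge> D" unfolding j_def find_step_def by (rule LeastI_ex[OF ex])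
    have jmin: "\<And>i. i < j \<Longrightarrow> \<not> (i \<ge> 1 \<and> ?r i = \<rho> \<and> x i \<ge> D)"
      unfolding j_def find_step_def by (rule not_less_Least)
    have D0: "D > 0" using D lam by simp
    have cost: "search_cost t x ?r \<rho> D = (\<Sum>i\<in>{1..<j}. 2 * x i + t) + D"
      unfolding search_cost_def j_def ..
    show ?thesis
    proof (cases "j \<le> m")
      case True
      have "(\<Sum>i\<in>{1..<j}. 2 * x i + t) \<le> (\<Sum>i\<in>{1..<0+m}. 2 * x i + t)"
        by (rule sum_mono2) (use True nn in auto)
      also have "\<dots> = (R - 1) * lam" using iden[of 0] x0 by simp
      also have "\<dots> \<le> (R - 1) * D" using R1 D by (simp add: mult_left_mono)
      finally have "search_cost t x ?r \<rho> D \<le> R * D" unfolding cost by (simp add: algebra_simps)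
      thus ?thesis using D0 by (simp add: divide_le_eq)
    next
      case False
      define n where "n = j - m"
      have jn: "j = n + m" using False unfolding n_def by simp
      have n1: "n \<ge> 1" using False unfolding n_def by simp
      have rn: "?r n = \<rho>" using cyc_shift[of m j] False jp unfolding n_def by simp
      have "n < j" using jn m2 by simp
      hence xn: "x n < D" using jmin[of n] n1 rn by auto
      have "(\<Sum>i\<in>{1..<j}. 2 * x i + t) = (R - 1) * x n" using iden[of n] jn by simp
      also have "\<dots> \<le> (R - 1) * D" using R1 xn by (simp add: mult_left_mono)
      finally have "search_cost t x ?r \<rho> D \<le> R * D" unfolding cost by (simp add: algebra_simps)
      thus ?thesis using D0 by (simp add: divide_le_eq)
    qed
  qed
  have attain: "search_cost t x ?r m lam / lam = R"
  proof -
    have fs: "find_step x ?r m lam = m"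
      unfolding find_step_def
    proof (rule Least_equality)
      show "1 \<le> m \<and> ?r m = m \<and> lam \<le> x m" using m2 cyc_small[of m m] xge by simp
    next
      fix y assume y: "1 \<le> y \<and> ?r y = m \<and> lam \<le> x y"
      show "m \<le> y"
      proof (rule ccontr)
        assume "\<not> m \<le> y"
        hence "?r y = y" using y cyc_small[of y m] by simp
        thus False using y \<open>\<not> m \<le> y\<close> by simp
      qed
    qed
    have "search_cost t x ?r m lam = (R - 1) * lam + lam"
      unfolding search_cost_def fs using iden[of 0] x0 by simp
    thus ?thesis using lam by (simp add: field_simps)
  qed
  have "comp_ratio m t lam x ?r = ereal R"
    unfolding comp_ratio_def
  proof (rule antisym)
    show "(SUP p\<in>{(\<rho>, D). \<rho> \<in> {1..m} \<and> lam \<le> D}. ereal (search_cost t x ?r (fst p) (snd p) / snd p)) \<le> ereal R"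
      by (rule SUP_least) (use upper in auto)
    show "ereal R \<le> (SUP p\<in>{(\<rho>, D). \<rho> \<in> {1..m} \<and> lam \<le> D}. ereal (search_cost t x ?r (fst p) (snd p) / snd p))"
      by (rule SUP_upper2[of "(m, lam)"]) (use attain m2 in auto)
  qed
  with valid show ?thesis by simp
qed


lemma lin_sum:
  fixes q al be u v :: real
  assumes "u * (q - 1) = al" "v * (q - 1) + u = be"
  shows "(\<Sum>i\<in>{1..<Suc N}. (al * real i + be) * q ^ i) = (u * real N + v) * q ^ (Suc N) - v * q"
proof (induction N)
  case 0 then show ?case by simp
next
  case (Suc N)
  have "(\<Sum>i\<in>{1..<Suc (Suc N)}. (al * real i + be) * q ^ i) =
        (\<Sum>i\<in>{1..<Suc N}. (al * real i + be) * q ^ i) + (al * real (Suc N) + be) * q ^ Suc N"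
    by simp
  also have "\<dots> = (u * real N + v) * q ^ (Suc N) - v * q + (al * real (Suc N) + be) * q ^ Suc N"
    using Suc by simp
  also have "\<dots> = (u * real (Suc N) + v) * q ^ (Suc (Suc N)) - v * q"
    unfolding assms(1)[symmetric] assms(2)[symmetric] by (simp add: algebra_simps)
  finally show ?case .
qed

lemma geo_sum:
  fixes b :: real
  shows "(\<Sum>i\<in>{1..<Suc N}. b ^ i) * (b - 1) = b ^ Suc N - b"
proof (induction N)
  case 0 then show ?case by simp
next
  case (Suc N)
  have "(\<Sum>i\<in>{1..<Suc (Suc N)}. b ^ i) * (b - 1) = (\<Sum>i\<in>{1..<Suc N}. b ^ i) * (b - 1) + b ^ Suc N * (b - 1)"
    by (simp add: distrib_right)
  also have "\<dots> = b ^ Suc (Suc N) - b" using Suc by (simp add: algebra_simps)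
  finally show ?case .
qed

lemma alg1:
  fixes q M u v al p s Q n :: real
  assumes qq: "q * (M - 1) = M" and ud: "u = al * (M - 1)" and vd: "v = (1 + s - u) * (M - 1)"
    and alM: "al * (M - 1) = 1 - (p - 1) * s"
  shows "(u * (n + M - 1) + v) * (Q * p * q) - v * q = M * p * ((al * n + (1 + s)) * Q - s)"
proof -
  have uq: "u * q = al * M"
  proof -
    have "u * q = al * (q * (M - 1))" unfolding ud by (simp only: mult_ac)
    thus ?thesis unfolding qq .
  qed
  have s1: "u * (M - 1) + v = (1 + s) * (M - 1)" unfolding vd by (simp add: algebra_simps)
  have vq: "v * q = M * p * s"
  proof -
    have "v * q = (1 + s - u) * (q * (M - 1))" unfolding vd by (simp only: mult_ac)
    also have "\<dots> = (1 + s - u) * M" unfolding qq ..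
    also have "\<dots> = (1 + s - (1 - (p - 1) * s)) * M" unfolding ud alM ..
    also have "\<dots> = M * p * s" by (simp add: algebra_simps)
    finally show ?thesis .
  qed
  have "(u * (n + M - 1) + v) * (Q * p * q) = (u * q) * n * Q * p + (u * (M - 1) + v) * q * Q * p"
    by (simp add: algebra_simps)
  also have "\<dots> = al * M * n * Q * p + (1 + s) * (q * (M - 1)) * Q * p" unfolding uq s1 by (simp only: mult_ac)
  also have "\<dots> = al * M * n * Q * p + (1 + s) * M * Q * p" unfolding qq ..
  finally show ?thesis unfolding vq by (simp add: algebra_simps)
qed

lemma case1_facts:
  fixes m :: nat and s lam :: real and x :: "nat \<Rightarrow> real" and R :: real
  assumes m2: "m \<ge> 2" and s0: "s \<ge> 0" and lam: "lam > 0"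
    and sle: "s \<le> 1 / ((real m / (real m - 1)) ^ (m - 1) - 1)"
  assumes x_def: "x = (\<lambda>i::nat. ((1 / (real m - 1) * (1 - ((real m / (real m - 1)) ^ (m - 1) - 1) * s) * real i
                          + (1 + s)) * (real m / (real m - 1)) ^ i - s) * lam)"
  shows "x 0 = lam" "\<And>i. x i \<ge> lam" "\<And>V. \<exists>N. \<forall>i\<ge>N. V < x i"
    "\<And>n. (\<Sum>i\<in>{1..<n+m}. 2 * x i + 2 * s * lam) = (1 + 2 * real m ^ m / (real m - 1) ^ (m - 1) - 1) * x n"
proof -
  define M where "M = real m"
  define q where "q = M / (M - 1)"
  define p where "p = q ^ (m - 1)"
  define al where "al = 1 / (M - 1) * (1 - (p - 1) * s)"
  have M1: "M - 1 > 0" unfolding M_def using m2 by simp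
  have q1: "q > 1" unfolding q_def using M1 by simp
  have p1: "p > 1" unfolding p_def using q1 m2 by (simp add: one_less_power)
  have xd: "x i = ((al * real i + (1 + s)) * q ^ i - s) * lam" for i
    unfolding x_def al_def p_def q_def M_def ..
  have al0: "al \<ge> 0"
  proof -
    have "s \<le> 1 / (p - 1)" using sle unfolding p_def q_def M_def .
    hence "s * (p - 1) \<le> 1 / (p - 1) * (p - 1)" using p1 by (intro mult_right_mono) auto
    hence "(p - 1) * s \<le> 1" using p1 by (simp add: mult.commute)
    thus ?thesis unfolding al_def using M1 by simp
  qed
  show "x 0 = lam" unfolding xd by simp
  have qi: "q ^ i \<ge> 1 + real i * (q - 1)" for i
    using Bernoulli_inequality[of "q - 1" i] q1 by simp
  have lowq: "x i \<ge> q ^ i * lam" for i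
  proof -
    have "q ^ i \<ge> 1" using q1 by simp
    have "(al * real i + (1 + s)) * q ^ i \<ge> (1 + s) * q ^ i"
      using al0 \<open>q ^ i \<ge> 1\<close> by (intro mult_right_mono) auto
    moreover have "s * (q ^ i - 1) \<ge> 0" using s0 \<open>q ^ i \<ge> 1\<close> by simp
    ultimately have "(al * real i + (1 + s)) * q ^ i - s \<ge> q ^ i" by (simp add: algebra_simps)
    thus ?thesis unfolding xd using lam by (simp add: mult_right_mono)
  qed
  show "x i \<ge> lam" for i
  proof -
    have "q ^ i \<ge> 1" using q1 by simp
    hence "1 * lam \<le> q ^ i * lam" using lam by (intro mult_right_mono) auto
    thus ?thesis using lowq[of i] by simp
  qed
  show "\<exists>N. \<forall>i\<ge>N. V < x i" for V
  proof -
    obtain N :: nat where N: "real N > V / (lam * (q - 1))" using reals_Archimedean2 by blast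
    have "V < x i" if "i \<ge> N" for i
    proof -
      have "V / (lam * (q - 1)) < real i" using N that by linarith
      hence "V < real i * (q - 1) * lam" using lam q1 by (simp add: field_simps)
      also have "\<dots> \<le> q ^ i * lam" using qi[of i] lam by (simp add: mult_right_mono)
      also have "\<dots> \<le> x i" by (rule lowq)
      finally show ?thesis .
    qed
    thus ?thesis by blast
  qed
  show "(\<Sum>i\<in>{1..<n+m}. 2 * x i + 2 * s * lam) = (1 + 2 * real m ^ m / (real m - 1) ^ (m - 1) - 1) * x n" for n
  proof -
    define u where "u = al * (M - 1)"
    define v where "v = (1 + s - u) * (M - 1)"
    have qm1: "q - 1 = 1 / (M - 1)" unfolding q_def using M1 by (simp add: field_simps)
    have h1: "u * (q - 1) = al" unfolding u_def qm1 using M1 by simp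
    have h2: "v * (q - 1) + u = 1 + s" unfolding v_def qm1 using M1 by simp
    have nm: "n + m = Suc (n + m - 1)" using m2 by simp
    have "(\<Sum>i\<in>{1..<n+m}. 2 * x i + 2 * s * lam) = (\<Sum>i\<in>{1..<n+m}. (2 * lam) * ((al * real i + (1 + s)) * q ^ i))"
      unfolding xd by (simp add: algebra_simps)
    also have "\<dots> = 2 * lam * (\<Sum>i\<in>{1..<Suc (n + m - 1)}. (al * real i + (1 + s)) * q ^ i)"
      by (simp only: nm[symmetric] sum_distrib_left)
    also have "\<dots> = 2 * lam * ((u * real (n + m - 1) + v) * q ^ (Suc (n + m - 1)) - v * q)"
      by (simp only: lin_sum[OF h1 h2])
    also have "\<dots> = 2 * lam * ((u * (real n + M - 1) + v) * (q ^ n * p * q) - v * q)"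
    proof -
      have "real (n + m - 1) = real n + M - 1" unfolding M_def using m2 by simp
      moreover have "q ^ (Suc (n + m - 1)) = q ^ n * p * q"
      proof -
        have "Suc (n + m - 1) = n + (m - 1) + 1" using m2 by simp
        thus ?thesis by (simp only: power_add power_one_right p_def)
      qed
      ultimately show ?thesis by simp
    qed
    also have "\<dots> = 2 * (M * p) * x n"
    proof -
      have qq: "q * (M - 1) = M" unfolding q_def using M1 by simp
      have alM: "al * (M - 1) = 1 - (p - 1) * s" unfolding al_def using M1 by simp
      have "(u * (real n + M - 1) + v) * (q ^ n * p * q) - v * q = M * p * ((al * real n + (1 + s)) * q ^ n - s)"
        by (rule alg1[OF qq u_def v_def alM])
      thus ?thesis unfolding xd by simp
    qed
    also have "M * p = real m ^ m / (real m - 1) ^ (m - 1)"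
    proof -
      have "M * p = M * (M ^ (m - 1) / (M - 1) ^ (m - 1))" unfolding p_def q_def by (simp add: power_divide)
      also have "M * M ^ (m - 1) = M ^ m" proof -
        have "m = Suc (m - 1)" using m2 by simp
        then show ?thesis by (metis power_Suc)
      qed
      ultimately show ?thesis unfolding M_def by simp
    qed
    finally show ?thesis by simp
  qed
qed

lemma case2_facts:
  fixes m :: nat and s lam :: real and x :: "nat \<Rightarrow> real" and R :: real
  assumes m2: "m \<ge> 2" and lam: "lam > 0"
    and sge: "s \<ge> 1 / ((real m / (real m - 1)) ^ (m - 1) - 1)"
  assumes x_def: "x = (\<lambda>i::nat. ((1 + s) * (1 + 1 / s) powr (real i / (real m - 1)) - s) * lam)"
  assumes R_def: "R = ((1 + 1 / s) powr (- 1 / (real m - 1)) - (3 + 2 / s))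
                   / ((1 + 1 / s) powr (- 1 / (real m - 1)) - 1)"
  shows "s > 0" "x 0 = lam" "\<And>i. x i \<ge> lam" "\<And>V. \<exists>N. \<forall>i\<ge>N. V < x i"
    "\<And>n. (\<Sum>i\<in>{1..<n+m}. 2 * x i + 2 * s * lam) = (R - 1) * x n"
proof -
  define M where "M = real m"
  define q where "q = M / (M - 1)"
  define p where "p = q ^ (m - 1)"
  have M1: "M - 1 > 0" unfolding M_def using m2 by simp
  have q1: "q > 1" unfolding q_def using M1 by simp
  have p1: "p > 1" unfolding p_def using q1 m2 by (simp add: one_less_power)
  have "s \<ge> 1 / (p - 1)" using sge unfolding p_def q_def M_def .
  moreover have "1 / (p - 1) > 0" using p1 by simp
  ultimately show s0: "s > 0" by linarith
  define c where "c = 1 + 1 / s"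
  define b where "b = c powr (1 / (M - 1))"
  have c1: "c > 1" unfolding c_def using s0 by simp
  have b1: "b > 1" unfolding b_def using c1 M1 by (intro gr_one_powr) auto
  have bi: "c powr (real i / (M - 1)) = b ^ i" for i
  proof -
    have "b ^ i = b powr real i" using b1 by (simp add: powr_realpow)
    also have "\<dots> = c powr (1 / (M - 1) * real i)" unfolding b_def by (simp add: powr_powr)
    finally show ?thesis by simp
  qed
  have xd: "x i = ((1 + s) * b ^ i - s) * lam" for i
    unfolding x_def c_def[symmetric] M_def[symmetric] bi ..
  have bm: "b ^ (m - 1) = c"
  proof -
    have "b ^ (m - 1) = c powr (real (m - 1) / (M - 1))" using bi by simp
    also have "real (m - 1) / (M - 1) = 1" unfolding M_def using m2 M1 M_def by simp
    finally show ?thesis using c1 by simp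
  qed
  have binv: "c powr (- 1 / (real m - 1)) = 1 / b"
  proof -
    have "c powr (- 1 / (real m - 1)) = c powr (- (1 / (M - 1)))" unfolding M_def by simp
    also have "\<dots> = 1 / b" unfolding b_def by (rule powr_minus_divide)
    finally show ?thesis .
  qed
  have Rd: "R - 1 = 2 * c * b / (b - 1)"
  proof -
    have "R = (1 / b - (3 + 2 / s)) / (1 / b - 1)" unfolding R_def c_def[symmetric] binv ..
    moreover have d: "1 / b - 1 \<noteq> 0" using b1 by simp
    ultimately have "R * (1 / b - 1) = 1 / b - (3 + 2 / s)" by simp
    hence "b * (R * (1 / b - 1)) = b * (1 / b - (3 + 2 / s))" by simp
    hence eq: "R * (1 - b) = 1 - (3 + 2 / s) * b" using b1 by (simp add: algebra_simps)
    have "(R - 1) * (b - 1) = - (R * (1 - b)) - b + 1" by (simp add: algebra_simps)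
    also have "\<dots> = 2 * c * b" unfolding eq c_def by (simp add: algebra_simps)
    finally show ?thesis using b1 by (simp add: field_simps)
  qed
  show "x 0 = lam" unfolding xd by simp
  have bge: "b ^ i \<ge> 1" for i using b1 by simp
  have lowb: "x i \<ge> b ^ i * lam" for i
  proof -
    have "(1 + s) * b ^ i - s \<ge> b ^ i" using s0 bge[of i] by (simp add: algebra_simps)
    thus ?thesis unfolding xd using lam by (simp add: mult_right_mono)
  qed
  show "x i \<ge> lam" for i
  proof -
    have "1 * lam \<le> b ^ i * lam" using lam bge[of i] by (intro mult_right_mono) auto
    thus ?thesis using lowb[of i] by simp
  qed
  have bi2: "b ^ i \<ge> 1 + real i * (b - 1)" for i
    using Bernoulli_inequality[of "b - 1" i] b1 by simp
  show "\<exists>N. \<forall>i\<ge>N. V < x i" for V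
  proof -
    obtain N :: nat where N: "real N > V / (lam * (b - 1))" using reals_Archimedean2 by blast
    have "V < x i" if "i \<ge> N" for i
    proof -
      have "V / (lam * (b - 1)) < real i" using N that by linarith
      hence "V < real i * (b - 1) * lam" using lam b1 by (simp add: field_simps)
      also have "\<dots> \<le> b ^ i * lam" using bi2[of i] lam by (simp add: mult_right_mono)
      also have "\<dots> \<le> x i" by (rule lowb)
      finally show ?thesis .
    qed
    thus ?thesis by blast
  qed
  show "(\<Sum>i\<in>{1..<n+m}. 2 * x i + 2 * s * lam) = (R - 1) * x n" for n
  proof -
    have nm: "n + m = Suc (n + m - 1)" using m2 by simp
    have "(\<Sum>i\<in>{1..<n+m}. 2 * x i + 2 * s * lam) = (\<Sum>i\<in>{1..<n+m}. (2 * lam * (1 + s)) * b ^ i)"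
      unfolding xd by (simp add: algebra_simps)
    also have "\<dots> = 2 * lam * (1 + s) * (\<Sum>i\<in>{1..<Suc (n + m - 1)}. b ^ i)"
      by (simp only: nm[symmetric] sum_distrib_left)
    also have "\<dots> = 2 * lam * (1 + s) * ((b ^ Suc (n + m - 1) - b) / (b - 1))"
    proof -
      have "(\<Sum>i\<in>{1..<Suc (n + m - 1)}. b ^ i) = (b ^ Suc (n + m - 1) - b) / (b - 1)"
        using geo_sum[of b "n + m - 1"] b1 by (simp add: eq_divide_eq)
      thus ?thesis by (simp only:)
    qed
    also have "b ^ Suc (n + m - 1) = b ^ n * c * b"
    proof -
      have "Suc (n + m - 1) = n + (m - 1) + 1" using m2 by simp
      thus ?thesis by (simp only: power_add power_one_right bm)
    qed
    also have "2 * lam * (1 + s) * ((b ^ n * c * b - b) / (b - 1)) = (R - 1) * x n"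
    proof -
      have cs: "c * s = 1 + s" unfolding c_def using s0 by (simp add: field_simps)
      have "2 * c * b * (((1 + s) * b ^ n - s) * lam) = 2 * lam * b * ((1 + s) * c * b ^ n - c * s)"
        by (simp add: algebra_simps)
      also have "\<dots> = 2 * lam * b * ((1 + s) * c * b ^ n - (1 + s))" unfolding cs ..
      also have "\<dots> = 2 * lam * (1 + s) * (b ^ n * c * b - b)" by (simp add: algebra_simps)
      finally have eq2: "2 * c * b * (((1 + s) * b ^ n - s) * lam) = 2 * lam * (1 + s) * (b ^ n * c * b - b)" .
      show ?thesis using eq2[symmetric] unfolding Rd xd using b1 by (simp add: field_simps)
    qed
    finally show ?thesis .
  qed
qed


lemma lower_bound:
  fixes x :: "nat \<Rightarrow> real" and r :: "nat \<Rightarrow> nat" and C lam t :: real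
  assumes m2: "m \<ge> 2" and lam: "lam > 0" and t: "t \<ge> 0" and valid: "valid_strategy m x r"
    and bound: "\<And>\<rho> D. \<rho> \<in> {1..m} \<Longrightarrow> D \<ge> lam \<Longrightarrow> search_cost t x r \<rho> D / D \<le> C"
  shows "1 + 2 * (real m * (real m / (real m - 1)) ^ (m - 1)) \<le> C"
proof -
  have xpos: "\<And>i. i \<ge> 1 \<Longrightarrow> x i > 0" and rin: "\<And>i. i \<ge> 1 \<Longrightarrow> r i \<in> {1..m}"
    using valid unfolding valid_strategy_def by auto
  have unb: "\<exists>i\<ge>1. r i = \<rho> \<and> V < x i" if "\<rho> \<in> {1..m}" for \<rho> V
  proof (rule ccontr)
    assume "\<not> ?thesis"
    hence "bdd_above {x i | i. i \<ge> 1 \<and> r i = \<rho>}" unfolding bdd_above_def by (auto simp: not_less)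
    thus False using valid that unfolding valid_strategy_def by blast
  qed
  define rec where "rec n \<longleftrightarrow> n \<ge> 1 \<and> (\<forall>j. 1 \<le> j \<and> j < n \<and> r j = r n \<longrightarrow> x j < x n)" for n
  have rec_ex: "\<exists>j\<ge>N. rec j \<and> r j = \<rho> \<and> V < x j" if rho: "\<rho> \<in> {1..m}" for \<rho> N V
  proof -
    define V' where "V' = \<bar>V\<bar> + (\<Sum>i<N. \<bar>x i\<bar>)"
    have "0 \<le> (\<Sum>i<N. \<bar>x i\<bar>)" by (rule sum_nonneg) simp
    hence V'1: "V \<le> V'" unfolding V'_def by linarith
    have V'2: "x i \<le> V'" if "i < N" for i
    proof -
      have "\<bar>x i\<bar> \<le> (\<Sum>i<N. \<bar>x i\<bar>)" by (rule member_le_sum) (use that in auto)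
      thus ?thesis unfolding V'_def by simp
    qed
    have ex: "\<exists>j. 1 \<le> j \<and> r j = \<rho> \<and> V' < x j" using unb[OF rho, of V'] by blast
    define j0 where "j0 = (LEAST j. 1 \<le> j \<and> r j = \<rho> \<and> V' < x j)"
    have j0: "1 \<le> j0 \<and> r j0 = \<rho> \<and> V' < x j0" unfolding j0_def by (rule LeastI_ex[OF ex])
    have j0min: "\<And>j. j < j0 \<Longrightarrow> \<not> (1 \<le> j \<and> r j = \<rho> \<and> V' < x j)"
      unfolding j0_def by (rule not_less_Least)
    have "rec j0" unfolding rec_def using j0 j0min by force
    moreover have "j0 \<ge> N" using V'2[of j0] j0 by (meson not_le not_less)
    ultimately show ?thesis using j0 V'1 by (intro exI[of _ j0]) auto
  qed
  define Rs where "Rs = {n. rec n}"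
  have infR: "infinite Rs"
    unfolding infinite_nat_iff_unbounded_le Rs_def
    using rec_ex[of 1] m2 by auto
  define e where "e = enumerate Rs"
  have erec: "rec (e k)" for k using enumerate_in_set[OF infR] unfolding e_def Rs_def by auto
  have emono: "e k < e k' \<longleftrightarrow> k < k'" for k k' unfolding e_def using infR by simp
  have emonole: "e k \<le> e k' \<longleftrightarrow> k \<le> k'" for k k' unfolding e_def using infR by simp
  have esurj: "\<exists>k. e k = j" if "rec j" for j
    unfolding e_def using enumerate_Ex[OF infR] that Rs_def by auto
  have inj_e: "inj e" unfolding inj_def using emono by (metis nat_neq_iff)
  have e1: "e k \<ge> 1" for k using erec[of k] unfolding rec_def by simp
  define z where "z k = x (e k)" for k
  define rho where "rho k = r (e k)" for k
  have zpos: "z k > 0" for k unfolding z_def using xpos e1 by simp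
  have rhoin: "rho k \<in> {1..m}" for k unfolding rho_def using rin e1 by simp
  have zinc: "z k < z k'" if "k < k'" "rho k = rho k'" for k k'
    using erec[of k'] e1[of k] that emono[of k k'] unfolding rec_def z_def rho_def by auto
  have rec_ex2: "\<exists>k\<ge>k0. rho k = \<rho> \<and> V < z k" if rh: "\<rho> \<in> {1..m}" for \<rho> k0 V
  proof -
    obtain j where j: "j \<ge> e k0" "rec j" "r j = \<rho>" "V < x j" using rec_ex[OF rh] by blast
    obtain k where k: "e k = j" using esurj j by blast
    have "k \<ge> k0" using j(1) k emonole[of k0 k] by metis
    thus ?thesis using j k unfolding rho_def z_def by auto
  qed
  define nxt where "nxt k = (LEAST k'. k < k' \<and> rho k' = rho k)" for k
  have nxt_ex: "\<exists>k'. k < k' \<and> rho k' = rho k" for k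
    using rec_ex2[OF rhoin[of k], of "Suc k" 0] Suc_le_eq by blast
  have nxt1: "k < nxt k \<and> rho (nxt k) = rho k" for k
    unfolding nxt_def by (rule LeastI_ex[OF nxt_ex])
  have nxt2: "\<And>y. k < y \<Longrightarrow> y < nxt k \<Longrightarrow> rho y \<noteq> rho k" for k
    unfolding nxt_def using not_less_Least by blast
  have nxt_inj: "inj nxt"
  proof (rule injI)
    fix k1 k2 assume eq: "nxt k1 = nxt k2"
    show "k1 = k2"
    proof (rule ccontr)
      assume "k1 \<noteq> k2"
      then consider "k1 < k2" | "k2 < k1" by linarith
      thus False
      proof cases
        case 1
        have "rho k2 = rho k1" using nxt1[of k1] nxt1[of k2] eq by simp
        thus False using nxt2[of k1 k2] 1 nxt1[of k2] eq by simp
      next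
        case 2
        have "rho k2 = rho k1" using nxt1[of k1] nxt1[of k2] eq by simp
        thus False using nxt2[of k2 k1] 2 nxt1[of k1] eq by simp
      qed
    qed
  qed
  define T where "T j = (\<Sum>l<j. z l)" for j
  have Tmono: "T i \<le> T j" if "i \<le> j" for i j
    unfolding T_def by (rule sum_mono2) (use that zpos in \<open>auto simp: less_imp_le\<close>)
  have Tnn: "T j \<ge> 0" for j unfolding T_def using zpos by (simp add: sum_nonneg less_imp_le)
  have between: "x y \<le> z k" if "1 \<le> y" "y < e (nxt k)" "r y = rho k" for y k
  proof (rule ccontr)
    assume "\<not> x y \<le> z k"
    hence gt: "x (e k) < x y" unfolding z_def by simp
    have ex: "\<exists>j. 1 \<le> j \<and> r j = rho k \<and> x (e k) < x j" using that gt by blast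
    define j0 where "j0 = (LEAST j. 1 \<le> j \<and> r j = rho k \<and> x (e k) < x j)"
    have j0: "1 \<le> j0 \<and> r j0 = rho k \<and> x (e k) < x j0" unfolding j0_def by (rule LeastI_ex[OF ex])
    have j0min: "\<And>j. j < j0 \<Longrightarrow> \<not> (1 \<le> j \<and> r j = rho k \<and> x (e k) < x j)"
      unfolding j0_def by (rule not_less_Least)
    have j0y: "j0 \<le> y" unfolding j0_def using that gt by (intro Least_le) auto
    have "rec j0" unfolding rec_def using j0 j0min by force
    then obtain k2 where k2: "e k2 = j0" using esurj by blast
    have "e k < j0"
    proof (rule ccontr)
      assume "\<not> e k < j0"
      hence "j0 \<le> e k" by simp
      moreover have "j0 \<noteq> e k" using j0 by auto
      ultimately have "j0 < e k" by simp
      hence "x j0 < x (e k)" using erec[of k] j0 unfolding rec_def rho_def by auto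
      thus False using j0 by simp
    qed
    hence "k < k2" using k2 emono by metis
    moreover have "k2 < nxt k" using k2 j0y that(2) emono by (metis le_less_trans)
    moreover have "rho k2 = rho k" using k2 j0 unfolding rho_def by simp
    ultimately show False using nxt2 by blast
  qed
  have constr: "2 * T (nxt k) \<le> (C - 1) * z k" if zl: "z k \<ge> lam" for k
  proof -
    define k' where "k' = nxt k"
    have kk': "k < k'" "rho k' = rho k" using nxt1[of k] unfolding k'_def by auto
    have Zpos: "T k' > 0"
    proof -
      have "z k \<le> T k'" unfolding T_def by (rule member_le_sum) (use kk' zpos in \<open>auto simp: less_imp_le\<close>)
      thus ?thesis using zpos[of k] by simp
    qed
    have D_ok: "2 * T k' \<le> (C - 1) * D" if D: "z k < D" "D \<le> z k'" for D
    proof -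
      have D0: "D > 0" using D zpos[of k] by simp
      have fs: "find_step x r (rho k) D = e k'"
        unfolding find_step_def
      proof (rule Least_equality)
        show "1 \<le> e k' \<and> r (e k') = rho k \<and> D \<le> x (e k')"
          using e1 kk' D unfolding rho_def z_def by simp
      next
        fix y assume y: "1 \<le> y \<and> r y = rho k \<and> D \<le> x y"
        show "e k' \<le> y"
        proof (rule ccontr)
          assume "\<not> e k' \<le> y"
          hence "x y \<le> z k" using between[of y k] y unfolding k'_def by simp
          thus False using y D by simp
        qed
      qed
      have sub: "e ` {..<k'} \<subseteq> {1..<e k'}" using e1 emono by auto
      have "(\<Sum>l<k'. 2 * z l) = (\<Sum>i\<in>e ` {..<k'}. 2 * x i)"
        unfolding z_def by (simp add: sum.reindex inj_on_subset[OF inj_e])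
      also have "\<dots> \<le> (\<Sum>i\<in>e ` {..<k'}. 2 * x i + t)" using t by (intro sum_mono) simp
      also have "\<dots> \<le> (\<Sum>i\<in>{1..<e k'}. 2 * x i + t)"
      proof (rule sum_mono2[OF _ sub])
        fix b assume "b \<in> {1..<e k'} - e ` {..<k'}"
        hence "x b > 0" using xpos by auto
        thus "0 \<le> 2 * x b + t" using t by simp
      qed simp
      finally have "2 * T k' + D \<le> search_cost t x r (rho k) D"
        unfolding search_cost_def fs T_def by (simp add: sum_distrib_left)
      also have "\<dots> \<le> C * D" using bound[OF rhoin[of k], of D] D0 D zl by (simp add: divide_le_eq)
      finally show ?thesis by (simp add: algebra_simps)
    qed
    show ?thesis
    proof (rule ccontr)
      assume neg: "\<not> 2 * T (nxt k) \<le> (C - 1) * z k"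
      hence neg': "(C - 1) * z k < 2 * T k'" unfolding k'_def by simp
      show False
      proof (cases "C - 1 \<le> 0")
        case True
        have "2 * T k' \<le> (C - 1) * z k'" using D_ok[of "z k'"] zinc[of k k'] kk' by simp
        also have "\<dots> \<le> 0" using True zpos[of k'] by (simp add: mult_nonpos_nonneg)
        finally show False using Zpos by simp
      next
        case False
        define D where "D = min (z k') ((z k + 2 * T k' / (C - 1)) / 2)"
        have c1: "z k < 2 * T k' / (C - 1)" using neg' False by (simp add: field_simps)
        have "z k < D" unfolding D_def using c1 zinc[of k k'] kk' by simp
        moreover have "D \<le> z k'" unfolding D_def by simp
        ultimately have "2 * T k' \<le> (C - 1) * D" by (rule D_ok)
        also have "\<dots> \<le> (C - 1) * ((z k + 2 * T k' / (C - 1)) / 2)"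
        proof -
          have "D \<le> (z k + 2 * T k' / (C - 1)) / 2" unfolding D_def by (rule min.cobounded2)
          thus ?thesis using False by (intro mult_left_mono) auto
        qed
        also have "\<dots> = ((C - 1) * z k + 2 * T k') / 2" using False by (simp add: field_simps)
        finally show False using neg' by simp
      qed
    qed
  qed
  have Tpos: "T j > 0" if "j \<ge> 1" for j
  proof -
    have "z 0 \<le> T j" unfolding T_def by (rule member_le_sum) (use that zpos in \<open>auto simp: less_imp_le\<close>)
    thus ?thesis using zpos[of 0] by simp
  qed
  have "\<forall>\<rho>\<in>{1..m}. \<exists>k. rho k = \<rho> \<and> lam < z k" using rec_ex2[of _ 0 lam] by blast
  then obtain f where f: "\<And>\<rho>. \<rho> \<in> {1..m} \<Longrightarrow> rho (f \<rho>) = \<rho> \<and> lam < z (f \<rho>)"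
    using bchoice[of "{1..m}" "\<lambda>\<rho> k. rho k = \<rho> \<and> lam < z k"] by blast
  define K where "K = (\<Sum>\<rho>\<in>{1..m}. f \<rho>) + 1"
  have fK: "f \<rho> < K" if "\<rho> \<in> {1..m}" for \<rho>
  proof -
    have "f \<rho> \<le> (\<Sum>\<rho>\<in>{1..m}. f \<rho>)" by (rule member_le_sum) (use that in auto)
    thus ?thesis unfolding K_def by simp
  qed
  have zK: "z k \<ge> lam" if "k \<ge> K" for k
  proof -
    have "f (rho k) < k" using fK[OF rhoin[of k]] that by simp
    hence "z (f (rho k)) < z k" using zinc f[OF rhoin[of k]] by simp
    thus ?thesis using f[OF rhoin[of k]] by simp
  qed
  define a where "a = (C - 1) / 2"
  have aK: "T (nxt k) \<le> a * z k" if "k \<ge> K" for k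
    using constr[OF zK[OF that]] unfolding a_def by simp
  have a0: "a > 0"
  proof -
    have "T (nxt K) > 0" using Tpos nxt1[of K] by simp
    hence "0 < a * z K" using aK[of K] by simp
    thus ?thesis using zpos[of K] by (simp add: zero_less_mult_iff)
  qed
  have "\<forall>\<rho>\<in>{1..m}. \<exists>k. rho k = \<rho> \<and> K \<le> k" using rec_ex2[of _ K 0] by blast
  then obtain g where g: "\<And>\<rho>. \<rho> \<in> {1..m} \<Longrightarrow> rho (g \<rho>) = \<rho> \<and> K \<le> g \<rho>"
    using bchoice[of "{1..m}" "\<lambda>\<rho> k. rho k = \<rho> \<and> K \<le> k"] by blast
  define K2 where "K2 = (\<Sum>\<rho>\<in>{1..m}. g \<rho>) + 1"
  have gK2: "g \<rho> < K2" if "\<rho> \<in> {1..m}" for \<rho>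
  proof -
    have "g \<rho> \<le> (\<Sum>\<rho>\<in>{1..m}. g \<rho>)" by (rule member_le_sum) (use that in auto)
    thus ?thesis unfolding K2_def by simp
  qed
  have K2pos: "K2 \<ge> 1" unfolding K2_def by simp
  have nxt_eq: "nxt k = j" if "k < j" "rho j = rho k" "\<And>y. k < y \<Longrightarrow> y < j \<Longrightarrow> rho y \<noteq> rho k" for k j
    unfolding nxt_def
  proof (rule Least_equality)
    show "k < j \<and> rho j = rho k" using that by simp
  next
    fix y assume "k < y \<and> rho y = rho k"
    thus "j \<le> y" using that(3)[of y] by (meson not_le)
  qed
  have main: "(\<Sum>j\<in>{K2..n}. T j) + (\<Sum>i\<in>{1..m}. T (n + i)) \<le> a * T (Suc n)" if nK2: "n \<ge> K2" for n
  proof -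
    have S1: "a * (\<Sum>k\<in>{K..n}. z k) \<le> a * T (Suc n)"
    proof -
      have "(\<Sum>k\<in>{K..n}. z k) \<le> T (Suc n)" unfolding T_def
        by (rule sum_mono2) (use zpos in \<open>auto simp: less_imp_le\<close>)
      thus ?thesis using a0 by (simp add: mult_left_mono)
    qed
    have S2: "(\<Sum>k\<in>{K..n}. T (nxt k)) \<le> a * (\<Sum>k\<in>{K..n}. z k)"
      unfolding sum_distrib_left by (rule sum_mono) (use aK in auto)
    have S3: "(\<Sum>k\<in>{K..n}. T (nxt k)) = (\<Sum>j\<in>nxt ` {K..n}. T j)"
      by (simp add: sum.reindex inj_on_subset[OF nxt_inj])
    define h where "h \<rho> = Max {k. K \<le> k \<and> k \<le> n \<and> rho k = \<rho>}" for \<rho>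
    have hfin: "finite {k. K \<le> k \<and> k \<le> n \<and> rho k = \<rho>}" for \<rho> by simp
    have hne: "{k. K \<le> k \<and> k \<le> n \<and> rho k = \<rho>} \<noteq> {}" if "\<rho> \<in> {1..m}" for \<rho>
      using g[OF that] gK2[OF that] nK2 by (intro ex_in_conv[THEN iffD1]) (auto intro!: exI[of _ "g \<rho>"])
    have hmem: "K \<le> h \<rho> \<and> h \<rho> \<le> n \<and> rho (h \<rho>) = \<rho>" if "\<rho> \<in> {1..m}" for \<rho>
      using Max_in[OF hfin hne[OF that]] unfolding h_def by simp
    have hmax: "k \<le> h \<rho>" if "K \<le> k" "k \<le> n" "rho k = \<rho>" for k \<rho>
      unfolding h_def by (rule Max_ge[OF hfin]) (use that in simp)
    have hn: "n < nxt (h \<rho>)" if rh: "\<rho> \<in> {1..m}" for \<rho>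
    proof (rule ccontr)
      assume "\<not> n < nxt (h \<rho>)"
      hence "nxt (h \<rho>) \<le> h \<rho>" using hmax[of "nxt (h \<rho>)" \<rho>] hmem[OF rh] nxt1[of "h \<rho>"] by simp
      thus False using nxt1[of "h \<rho>"] by simp
    qed
    define B where "B = (\<lambda>\<rho>. nxt (h \<rho>)) ` {1..m}"
    have injB: "inj_on (\<lambda>\<rho>. nxt (h \<rho>)) {1..m}"
    proof (rule inj_onI)
      fix \<rho>1 \<rho>2 assume r1: "\<rho>1 \<in> {1..m}" and r2: "\<rho>2 \<in> {1..m}" and eq: "nxt (h \<rho>1) = nxt (h \<rho>2)"
      have "rho (nxt (h \<rho>1)) = \<rho>1" using nxt1[of "h \<rho>1"] hmem[OF r1] by simp
      moreover have "rho (nxt (h \<rho>2)) = \<rho>2" using nxt1[of "h \<rho>2"] hmem[OF r2] by simp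
      ultimately show "\<rho>1 = \<rho>2" using eq by metis
    qed
    have cardB: "card B = m" unfolding B_def using card_image[OF injB] by simp
    have Bsub: "B \<subseteq> {n<..}" unfolding B_def using hn by auto
    have Bsub2: "B \<subseteq> nxt ` {K..n}" unfolding B_def using hmem by auto
    have finB: "finite B" unfolding B_def by simp
    have Asub: "{K2..n} \<subseteq> nxt ` {K..n}"
    proof
      fix j assume j: "j \<in> {K2..n}"
      define \<rho>0 where "\<rho>0 = rho j"
      have r0: "\<rho>0 \<in> {1..m}" unfolding \<rho>0_def by (rule rhoin)
      define P where "P = {k. K \<le> k \<and> k < j \<and> rho k = \<rho>0}"
      have Pfin: "finite P" unfolding P_def by simp
      have "g \<rho>0 \<in> P" unfolding P_def using g[OF r0] gK2[OF r0] j by auto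
      hence Pne: "P \<noteq> {}" by blast
      define kk where "kk = Max P"
      have kk: "K \<le> kk \<and> kk < j \<and> rho kk = \<rho>0" using Max_in[OF Pfin Pne] unfolding kk_def P_def by simp
      have "nxt kk = j"
      proof (rule nxt_eq)
        show "kk < j" using kk by simp
        show "rho j = rho kk" using kk unfolding \<rho>0_def by simp
        fix y assume y: "kk < y" "y < j"
        show "rho y \<noteq> rho kk"
        proof
          assume "rho y = rho kk"
          hence "y \<in> P" unfolding P_def using y kk by simp
          hence "y \<le> kk" unfolding kk_def using Max_ge[OF Pfin] by simp
          thus False using y by simp
        qed
      qed
      moreover have "kk \<in> {K..n}" using kk j by simp
      ultimately show "j \<in> nxt ` {K..n}" by blast
    qed
    have disj: "{K2..n} \<inter> B = {}" using Bsub by auto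
    have S4: "(\<Sum>j\<in>{K2..n}. T j) + (\<Sum>j\<in>B. T j) \<le> (\<Sum>j\<in>nxt ` {K..n}. T j)"
    proof -
      have "(\<Sum>j\<in>{K2..n}. T j) + (\<Sum>j\<in>B. T j) = (\<Sum>j\<in>{K2..n} \<union> B. T j)"
        using disj finB by (simp add: sum.union_disjoint)
      also have "\<dots> \<le> (\<Sum>j\<in>nxt ` {K..n}. T j)"
        by (rule sum_mono2) (use Asub Bsub2 Tnn in auto)
      finally show ?thesis .
    qed
    have S5: "(\<Sum>i\<in>{1..m}. T (n + i)) \<le> (\<Sum>j\<in>B. T j)"
      by (rule distinct_sum_ge[OF Tmono finB Bsub cardB])
    show ?thesis using S1 S2 S3 S4 S5 by linarith
  qed
  define u where "u i = (\<Sum>j\<in>{K2..K2 + i}. T j)" for i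
  have usuc: "u (Suc i) = u i + T (Suc (K2 + i))" for i
    unfolding u_def by simp
  have upos: "u i > 0" for i
  proof -
    have "T K2 \<le> u i" unfolding u_def by (rule member_le_sum) (use Tnn in auto)
    thus ?thesis using Tpos[OF K2pos] by simp
  qed
  have uinc: "u i < u (Suc i)" for i using usuc[of i] Tpos[of "Suc (K2 + i)"] by simp
  have uineq: "u (i + m) \<le> a * (u (Suc i) - u i)" for i
  proof -
    have "u (i + m) = (\<Sum>j\<in>{K2..(K2 + i) + m}. T j)" unfolding u_def by (simp add: add.assoc)
    also have "\<dots> = (\<Sum>j\<in>{K2..K2 + i}. T j) + (\<Sum>l\<in>{1..m}. T (K2 + i + l))"
      by (rule sum_split_tail) simp
    also have "\<dots> \<le> a * T (Suc (K2 + i))" by (rule main) simp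
    also have "\<dots> = a * (u (Suc i) - u i)" using usuc[of i] by simp
    finally show ?thesis .
  qed
  have "real m * (real m / (real m - 1)) ^ (m - 1) \<le> a"
    by (rule gal[OF m2 upos uinc uineq])
  thus ?thesis unfolding a_def by simp
qed


lemma pow_eq:
  fixes m :: nat assumes "m \<ge> 2"
  shows "real m ^ m / (real m - 1) ^ (m - 1) = real m * (real m / (real m - 1)) ^ (m - 1)"
proof -
  have "m = Suc (m - 1)" using assms by simp
  hence "real m ^ m = real m * real m ^ (m - 1)" by (metis power_Suc)
  thus ?thesis by (simp add: power_divide)
qed

lemma lower_ereal:
  fixes x :: "nat \<Rightarrow> real" and r :: "nat \<Rightarrow> nat" and lam t :: real
  assumes m2: "m \<ge> 2" and lam: "lam > 0" and t: "t \<ge> 0" and valid: "valid_strategy m x r"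
  shows "ereal (1 + 2 * real m ^ m / (real m - 1) ^ (m - 1)) \<le> comp_ratio m t lam x r"
proof -
  define S where "S = comp_ratio m t lam x r"
  have el: "ereal (search_cost t x r \<rho> D / D) \<le> S" if "\<rho> \<in> {1..m}" "D \<ge> lam" for \<rho> D
    unfolding S_def comp_ratio_def by (rule SUP_upper2[of "(\<rho>, D)"]) (use that in auto)
  have R: "1 + 2 * real m ^ m / (real m - 1) ^ (m - 1) = 1 + 2 * (real m * (real m / (real m - 1)) ^ (m - 1))"
    using pow_eq[OF m2] by simp
  have "ereal (1 + 2 * real m ^ m / (real m - 1) ^ (m - 1)) \<le> S"
  proof (cases S)
    case (real C)
    have "1 + 2 * (real m * (real m / (real m - 1)) ^ (m - 1)) \<le> C"
      by (rule lower_bound[OF m2 lam t valid]) (use el real in auto)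
    thus ?thesis using real R by simp
  next
    case PInf thus ?thesis by simp
  next
    case MInf
    have "ereal (search_cost t x r 1 lam / lam) \<le> S" by (rule el) (use m2 in auto)
    thus ?thesis using MInf by simp
  qed
  thus ?thesis unfolding S_def .
qed

theorem theorem6:
  fixes m :: nat and t lam s :: real
  assumes "m \<ge> 2" and "t \<ge> 0" and "lam > 0" and "s = t / (2 * lam)"
  shows
   "(s \<le> 1 / ((real m / (real m - 1)) ^ (m - 1) - 1) \<longrightarrow>
      (let x = (\<lambda>i::nat. ((1 / (real m - 1) * (1 - ((real m / (real m - 1)) ^ (m - 1) - 1) * s) * real i
                          + (1 + s)) * (real m / (real m - 1)) ^ i - s) * lam)
       in valid_strategy m x (cyclic_rays m) \<and>
          optimal_strategy m t lam x (cyclic_rays m) \<and>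
          comp_ratio m t lam x (cyclic_rays m) =
            ereal (1 + 2 * real m ^ m / (real m - 1) ^ (m - 1))))
    \<and>
    (s \<ge> 1 / ((real m / (real m - 1)) ^ (m - 1) - 1) \<longrightarrow>
      (let x = (\<lambda>i::nat. ((1 + s) * (1 + 1 / s) powr (real i / (real m - 1)) - s) * lam)
       in valid_strategy m x (cyclic_rays m) \<and>
          comp_ratio m t lam x (cyclic_rays m) =
            ereal (((1 + 1 / s) powr (- 1 / (real m - 1)) - (3 + 2 / s))
                   / ((1 + 1 / s) powr (- 1 / (real m - 1)) - 1))))"
proof (intro conjI impI)
  note m2 = assms(1) and t0 = assms(2) and lam = assms(3)
  have tt: "t = 2 * s * lam" using assms(4) lam by (simp add: field_simps)
  have s0: "s \<ge> 0" using assms(4) t0 lam by simp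
  {
    assume sle: "s \<le> 1 / ((real m / (real m - 1)) ^ (m - 1) - 1)"
    define x where "x = (\<lambda>i::nat. ((1 / (real m - 1) * (1 - ((real m / (real m - 1)) ^ (m - 1) - 1) * s) * real i
                          + (1 + s)) * (real m / (real m - 1)) ^ i - s) * lam)"
    note F = case1_facts[OF m2 s0 lam sle x_def]
    have C: "valid_strategy m x (cyclic_rays m) \<and> comp_ratio m t lam x (cyclic_rays m) = ereal (1 + 2 * real m ^ m / (real m - 1) ^ (m - 1))"
    proof (rule cyclic_ratio[OF m2 lam t0 F(1) F(2) F(3)])
      fix n show "(\<Sum>i\<in>{1..<n+m}. 2 * x i + t) = (1 + 2 * real m ^ m / (real m - 1) ^ (m - 1) - 1) * x n"
        using F(4)[of n] by (simp only: tt)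
    qed
    have "optimal_strategy m t lam x (cyclic_rays m)"
      unfolding optimal_strategy_def
    proof (intro conjI allI impI)
      show "valid_strategy m x (cyclic_rays m)" using C by blast
      fix x' r' assume v: "valid_strategy m x' r'"
      show "comp_ratio m t lam x (cyclic_rays m) \<le> comp_ratio m t lam x' r'"
        using C lower_ereal[OF m2 lam t0 v] by (simp only:)
    qed
    with C show "let x = (\<lambda>i::nat. ((1 / (real m - 1) * (1 - ((real m / (real m - 1)) ^ (m - 1) - 1) * s) * real i
                          + (1 + s)) * (real m / (real m - 1)) ^ i - s) * lam)
       in valid_strategy m x (cyclic_rays m) \<and>
          optimal_strategy m t lam x (cyclic_rays m) \<and>
          comp_ratio m t lam x (cyclic_rays m) =
            ereal (1 + 2 * real m ^ m / (real m - 1) ^ (m - 1))"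
      unfolding Let_def x_def[symmetric] by blast
  }
  {
    assume sge: "s \<ge> 1 / ((real m / (real m - 1)) ^ (m - 1) - 1)"
    define x where "x = (\<lambda>i::nat. ((1 + s) * (1 + 1 / s) powr (real i / (real m - 1)) - s) * lam)"
    define R where "R = ((1 + 1 / s) powr (- 1 / (real m - 1)) - (3 + 2 / s))
                   / ((1 + 1 / s) powr (- 1 / (real m - 1)) - 1)"
    note F = case2_facts[OF m2 lam sge x_def R_def]
    have C: "valid_strategy m x (cyclic_rays m) \<and> comp_ratio m t lam x (cyclic_rays m) = ereal R"
    proof (rule cyclic_ratio[OF m2 lam t0 F(2) F(3) F(4)])
      fix n show "(\<Sum>i\<in>{1..<n+m}. 2 * x i + t) = (R - 1) * x n"
        using F(5)[of n] by (simp only: tt)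
    qed
    thus "let x = (\<lambda>i::nat. ((1 + s) * (1 + 1 / s) powr (real i / (real m - 1)) - s) * lam)
       in valid_strategy m x (cyclic_rays m) \<and>
          comp_ratio m t lam x (cyclic_rays m) =
            ereal (((1 + 1 / s) powr (- 1 / (real m - 1)) - (3 + 2 / s))
                   / ((1 + 1 / s) powr (- 1 / (real m - 1)) - 1))"
      unfolding Let_def x_def[symmetric] R_def[symmetric] .
  }
qed

end
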